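(* Suppose $K$ is a field, $\tau_{(i)}\neq0$ for all $i\in\Omega$, and that for all $B,D\in\mathcal{I}(\overline{\mathbf{P}})$, $|B|=|D|$ implies $\pi(\Omega,B)=\pi(\Omega,D)$. Then $\mathbf{P}$ is hierarchical.
   Context: $\Omega$ is a finite set and $\mathbf{P}=(\Omega,\preccurlyeq_{\mathbf{P}})$ a poset; $\overline{\mathbf{P}}$ is the dual poset and $\mathcal{I}(\overline{\mathbf{P}})$ its set of ideals (up-closed subsets of $\mathbf{P}$). For $Y\subseteq\Omega$: $\max(Y)$ is the set of maximal elements of $Y$ w.r.t. $\preccurlyeq_{\mathbf{P}}$; $\mathcal{I}(Y)$ is the set of down-closed subsets of $Y$. $\tau,\eta\in K^{\Omega}$. For $D,I\subseteq\Omega$, $\varphi(D,I)=(-1)^{|I\cap D|}\big(\prod_{i\in I-\max(I)}\tau_{(i)}\big)\big(\prod_{i\in\max(I)-D}\eta_{(i)}\big)$ if $I\cap D\subseteq\max(I)$, and $0$ otherwise; for $D\subseteq Y\subseteq\Omega$, $\pi(Y,D)=\sum_{I\in\mathcal{I}(Y)}\varphi(D,I)x^{|I|}\in K[x]$. $\mathrm{len}(y)$ is the largest cardinality of a chain in $\mathbf{P}$ with greatest element $y$; $\mathbf{P}$ is hierarchical if $\mathrm{len}(u)+1\leqslant\mathrm{len}(v)$ implies $u\preccurlyeq_{\mathbf{P}}v$. *)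

theory Defs
  imports "HOL-Computational_Algebra.Polynomial"
begin

definition poset_on :: "'a set \<Rightarrow> ('a \<Rightarrow> 'a \<Rightarrow> bool) \<Rightarrow> bool" where
  "poset_on \<Omega> le \<longleftrightarrow>
     (\<forall>x\<in>\<Omega>. le x x) \<and>
     (\<forall>x\<in>\<Omega>. \<forall>y\<in>\<Omega>. le x y \<and> le y x \<longrightarrow> x = y) \<and>
     (\<forall>x\<in>\<Omega>. \<forall>y\<in>\<Omega>. \<forall>z\<in>\<Omega>. le x y \<and> le y z \<longrightarrow> le x z)"

definition maxel :: "('a \<Rightarrow> 'a \<Rightarrow> bool) \<Rightarrow> 'a set \<Rightarrow> 'a set" where
  "maxel le Y = {y \<in> Y. \<forall>z\<in>Y. le y z \<longrightarrow> z = y}"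

definition down_sets :: "('a \<Rightarrow> 'a \<Rightarrow> bool) \<Rightarrow> 'a set \<Rightarrow> 'a set set" where
  "down_sets le Y = {I. I \<subseteq> Y \<and> (\<forall>i\<in>I. \<forall>j\<in>Y. le j i \<longrightarrow> j \<in> I)}"

definition dual_ideals :: "'a set \<Rightarrow> ('a \<Rightarrow> 'a \<Rightarrow> bool) \<Rightarrow> 'a set set" where
  "dual_ideals \<Omega> le = {I. I \<subseteq> \<Omega> \<and> (\<forall>i\<in>I. \<forall>j\<in>\<Omega>. le i j \<longrightarrow> j \<in> I)}"

definition phi :: "('a \<Rightarrow> 'a \<Rightarrow> bool) \<Rightarrow> ('a \<Rightarrow> 'k::field) \<Rightarrow> ('a \<Rightarrow> 'k)
                    \<Rightarrow> 'a set \<Rightarrow> 'a set \<Rightarrow> 'k" where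
  "phi le \<tau> \<eta> D I =
     (if I \<inter> D \<subseteq> maxel le I
      then (-1) ^ card (I \<inter> D) * (\<Prod>i\<in>I - maxel le I. \<tau> i) * (\<Prod>i\<in>maxel le I - D. \<eta> i)
      else 0)"

definition pi_poly :: "('a \<Rightarrow> 'a \<Rightarrow> bool) \<Rightarrow> ('a \<Rightarrow> 'k::field) \<Rightarrow> ('a \<Rightarrow> 'k)
                       \<Rightarrow> 'a set \<Rightarrow> 'a set \<Rightarrow> 'k poly" where
  "pi_poly le \<tau> \<eta> Y D = (\<Sum>I\<in>down_sets le Y. monom (phi le \<tau> \<eta> D I) (card I))"

definition chain_top :: "'a set \<Rightarrow> ('a \<Rightarrow> 'a \<Rightarrow> bool) \<Rightarrow> 'a \<Rightarrow> 'a set \<Rightarrow> bool" where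
  "chain_top \<Omega> le y C \<longleftrightarrow> C \<subseteq> \<Omega> \<and> y \<in> C \<and>
     (\<forall>a\<in>C. \<forall>b\<in>C. le a b \<or> le b a) \<and> (\<forall>c\<in>C. le c y)"

definition len :: "'a set \<Rightarrow> ('a \<Rightarrow> 'a \<Rightarrow> bool) \<Rightarrow> 'a \<Rightarrow> nat" where
  "len \<Omega> le y = Max (card ` {C. chain_top \<Omega> le y C})"

definition hierarchical :: "'a set \<Rightarrow> ('a \<Rightarrow> 'a \<Rightarrow> bool) \<Rightarrow> bool" where
  "hierarchical \<Omega> le \<longleftrightarrow>
     (\<forall>u\<in>\<Omega>. \<forall>v\<in>\<Omega>. len \<Omega> le u + 1 \<le> len \<Omega> le v \<longrightarrow> le u v)"

end

theory Submission
  imports Defs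
begin

definition minel :: "('a \<Rightarrow> 'a \<Rightarrow> bool) \<Rightarrow> 'a set \<Rightarrow> 'a set" where
  "minel le D = {d \<in> D. \<forall>e\<in>D. le e d \<longrightarrow> e = d}"

definition QQ :: "'a set \<Rightarrow> ('a \<Rightarrow> 'a \<Rightarrow> bool) \<Rightarrow> nat \<Rightarrow> 'a set" where
  "QQ \<Omega> le l = {x \<in> \<Omega>. len \<Omega> le x \<le> l + 1 \<and> (\<forall>z\<in>\<Omega>. le x z \<and> z \<noteq> x \<longrightarrow> l + 2 \<le> len \<Omega> le z)}"

definition DD :: "'a set \<Rightarrow> ('a \<Rightarrow> 'a \<Rightarrow> bool) \<Rightarrow> nat \<Rightarrow> 'a set" where
  "DD \<Omega> le l = {y \<in> \<Omega>. \<exists>q\<in>QQ \<Omega> le l. le q y}"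

context
  fixes \<Omega> :: "'a set" and le :: "'a \<Rightarrow> 'a \<Rightarrow> bool"
  assumes fin: "finite \<Omega>" and po: "poset_on \<Omega> le"
begin

lemma po_refl: "x \<in> \<Omega> \<Longrightarrow> le x x"
  using po unfolding poset_on_def by blast

lemma po_antisym: "x \<in> \<Omega> \<Longrightarrow> y \<in> \<Omega> \<Longrightarrow> le x y \<Longrightarrow> le y x \<Longrightarrow> x = y"
  using po unfolding poset_on_def by blast

lemma po_trans: "x \<in> \<Omega> \<Longrightarrow> y \<in> \<Omega> \<Longrightarrow> z \<in> \<Omega> \<Longrightarrow> le x y \<Longrightarrow> le y z \<Longrightarrow> le x z"
  using po unfolding poset_on_def by blast

lemma chains_finite: "finite {C. chain_top \<Omega> le y C}"
  by (rule finite_subset[of _ "Pow \<Omega>"]) (auto simp: chain_top_def fin)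

lemma chain_single: "y \<in> \<Omega> \<Longrightarrow> chain_top \<Omega> le y {y}"
  by (auto simp: chain_top_def po_refl)

lemma len_ge: "chain_top \<Omega> le y C \<Longrightarrow> card C \<le> len \<Omega> le y"
  unfolding len_def using chains_finite by (auto intro!: Max_ge)

lemma len_ex: "y \<in> \<Omega> \<Longrightarrow> \<exists>C. chain_top \<Omega> le y C \<and> card C = len \<Omega> le y"
proof -
  assume "y \<in> \<Omega>"
  then have "{C. chain_top \<Omega> le y C} \<noteq> {}" using chain_single by blast
  then have "len \<Omega> le y \<in> card ` {C. chain_top \<Omega> le y C}"
    unfolding len_def using chains_finite by (intro Max_in) auto
  then show ?thesis by auto
qed

lemma len_pos: "y \<in> \<Omega> \<Longrightarrow> 1 \<le> len \<Omega> le y"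
  using len_ge[OF chain_single] by fastforce

lemma chain_fin: "chain_top \<Omega> le y C \<Longrightarrow> finite C"
  using fin unfolding chain_top_def by (auto intro: finite_subset)

lemma len_mono:
  assumes "x \<in> \<Omega>" "y \<in> \<Omega>" "le x y" "x \<noteq> y"
  shows "len \<Omega> le x < len \<Omega> le y"
proof -
  obtain C where C: "chain_top \<Omega> le x C" "card C = len \<Omega> le x" using len_ex assms by blast
  have fC: "finite C" using C(1) by (rule chain_fin)
  have yC: "y \<notin> C"
  proof
    assume "y \<in> C" then have "le y x" using C(1) unfolding chain_top_def by auto
    then show False using po_antisym assms by blast
  qed
  have "chain_top \<Omega> le y (insert y C)"
    using C(1) assms unfolding chain_top_def
    by (auto intro: po_refl) (meson po_trans subsetD)+
  then have "card (insert y C) \<le> len \<Omega> le y" by (rule len_ge)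
  then show ?thesis using fC yC C(2) by simp
qed

lemma len_pred:
  assumes "y \<in> \<Omega>" "2 \<le> len \<Omega> le y"
  shows "\<exists>x\<in>\<Omega>. le x y \<and> x \<noteq> y \<and> len \<Omega> le x + 1 = len \<Omega> le y"
proof -
  obtain C where C: "chain_top \<Omega> le y C" "card C = len \<Omega> le y" using len_ex assms by blast
  have fC: "finite C" using C(1) by (rule chain_fin)
  have yC: "y \<in> C" using C(1) unfolding chain_top_def by auto
  let ?C = "C - {y}"
  have ne: "?C \<noteq> {}"
  proof
    assume "?C = {}" then have "C \<subseteq> {y}" by auto
    then have "card C \<le> 1" using card_mono[of "{y}" C] by simp
    then show False using C(2) assms(2) by simp
  qed
  have fC': "finite (len \<Omega> le ` ?C)" using fC by simp
  have "Max (len \<Omega> le ` ?C) \<in> len \<Omega> le ` ?C" using fC' ne by (intro Max_in) auto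
  then obtain x where x: "x \<in> ?C" "len \<Omega> le x = Max (len \<Omega> le ` ?C)" by (metis imageE)
  have xmax: "\<forall>c\<in>?C. len \<Omega> le c \<le> len \<Omega> le x" using x(2) fC' by auto
  have CO: "C \<subseteq> \<Omega>" using C(1) unfolding chain_top_def by auto
  have "chain_top \<Omega> le x ?C"
    unfolding chain_top_def
  proof (intro conjI ballI)
    show "?C \<subseteq> \<Omega>" using CO by auto
    show "x \<in> ?C" by fact
    fix a b assume "a \<in> ?C" "b \<in> ?C"
    then show "le a b \<or> le b a" using C(1) unfolding chain_top_def by auto
  next
    fix c assume c: "c \<in> ?C"
    have "le c x \<or> le x c" using C(1) c x(1) unfolding chain_top_def by auto
    moreover have "\<not> (le x c \<and> x \<noteq> c)"
      using len_mono[of x c] xmax c x(1) CO by force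
    ultimately show "le c x" using po_refl c CO by auto
  qed
  then have "card ?C \<le> len \<Omega> le x" by (rule len_ge)
  moreover have "card ?C = len \<Omega> le y - 1" using C(2) yC fC by simp
  moreover have "le x y" "x \<noteq> y" "x \<in> \<Omega>" using C(1) x(1) CO unfolding chain_top_def by auto
  moreover have "len \<Omega> le x < len \<Omega> le y" using len_mono calculation assms(1) by blast
  ultimately show ?thesis using assms by force
qed

lemma len_down:
  "y \<in> \<Omega> \<Longrightarrow> 1 \<le> k \<Longrightarrow> k \<le> len \<Omega> le y \<Longrightarrow> \<exists>x\<in>\<Omega>. le x y \<and> len \<Omega> le x = k"
proof (induction "len \<Omega> le y - k" arbitrary: y)
  case 0
  then show ?case using po_refl by force
next
  case (Suc m)
  have "2 \<le> len \<Omega> le y" using Suc.hyps(2) Suc.prems(2) by arith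
  then obtain x where x: "x \<in> \<Omega>" "le x y" "len \<Omega> le x + 1 = len \<Omega> le y"
    using len_pred[of y] Suc.prems(1) by blast
  have "m = len \<Omega> le x - k" "k \<le> len \<Omega> le x" using x(3) Suc.hyps(2) by arith+
  then obtain x' where "x' \<in> \<Omega>" "le x' x" "len \<Omega> le x' = k"
    using Suc.hyps(1)[of x] x(1) Suc.prems(2) by blast
  then show ?case using x po_trans Suc.prems(1) by blast
qed


lemma down_sets_fin: "finite (down_sets le \<Omega>)"
  by (rule finite_subset[of _ "Pow \<Omega>"]) (auto simp: down_sets_def fin)

lemma coeff_pi:
  "coeff (pi_poly le \<tau> \<eta> \<Omega> D) k = (\<Sum>I\<in>down_sets le \<Omega>. if card I = k then phi le \<tau> \<eta> D I else 0)"
  unfolding pi_poly_def by (simp add: coeff_sum coeff_monom)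

lemma phi_nz_min:
  assumes D: "D \<in> dual_ideals \<Omega> le" and I: "I \<in> down_sets le \<Omega>"
    and nz: "phi le \<tau> \<eta> D I \<noteq> 0"
  shows "I \<inter> D \<subseteq> minel le D"
proof
  fix a assume a: "a \<in> I \<inter> D"
  have sub: "I \<inter> D \<subseteq> maxel le I" using nz unfolding phi_def by (auto split: if_splits)
  have "\<forall>e\<in>D. le e a \<longrightarrow> e = a"
  proof (intro ballI impI)
    fix e assume e: "e \<in> D" "le e a"
    have "e \<in> \<Omega>" using e D unfolding dual_ideals_def by auto
    then have "e \<in> I" using I a e unfolding down_sets_def by auto
    then have "e \<in> maxel le I" using sub e by auto
    then show "e = a" using a e unfolding maxel_def by auto
  qed
  then show "a \<in> minel le D" using a unfolding minel_def by auto
qed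

lemma phi_nz_card:
  assumes D: "D \<in> dual_ideals \<Omega> le" and I: "I \<in> down_sets le \<Omega>"
    and nz: "phi le \<tau> \<eta> D I \<noteq> 0"
  shows "card I \<le> card (\<Omega> - D) + card (minel le D)"
proof -
  have IO: "I \<subseteq> \<Omega>" using I unfolding down_sets_def by auto
  have DO: "D \<subseteq> \<Omega>" using D unfolding dual_ideals_def by auto
  have fI: "finite I" using IO fin by (auto intro: finite_subset)
  have "card I = card (I - D) + card (I \<inter> D)"
    using fI by (metis Int_Diff_disjoint Un_Diff_Int card_Un_disjoint finite_Diff finite_Int inf_commute)
  also have "card (I - D) \<le> card (\<Omega> - D)" using IO fin by (intro card_mono) auto
  also have "card (I \<inter> D) \<le> card (minel le D)"
    using phi_nz_min[OF D I nz] fin DO by (intro card_mono) (auto simp: minel_def intro: finite_subset)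
  finally show ?thesis by simp
qed

lemma coeff_zero:
  assumes D: "D \<in> dual_ideals \<Omega> le" and N: "card (\<Omega> - D) + card (minel le D) < N"
  shows "coeff (pi_poly le \<tau> \<eta> \<Omega> D) N = 0"
  unfolding coeff_pi
proof (rule sum.neutral, intro ballI)
  fix I assume I: "I \<in> down_sets le \<Omega>"
  show "(if card I = N then phi le \<tau> \<eta> D I else 0) = 0"
    using phi_nz_card[OF D I, of \<tau> \<eta>] N by (cases "card I = N") auto
qed

lemma coeff_nz:
  assumes D: "D \<in> dual_ideals \<Omega> le"
    and good: "\<forall>c\<in>\<Omega> - D. \<exists>q\<in>minel le D. le c q"
    and tau: "\<forall>i\<in>\<Omega>. \<tau> i \<noteq> 0"
  shows "coeff (pi_poly le \<tau> \<eta> \<Omega> D) (card (\<Omega> - D) + card (minel le D)) \<noteq> 0"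
proof -
  let ?N = "card (\<Omega> - D) + card (minel le D)"
  let ?M = "minel le D"
  let ?I0 = "(\<Omega> - D) \<union> ?M"
  have DO: "D \<subseteq> \<Omega>" using D unfolding dual_ideals_def by auto
  have Dup: "\<And>i j. i \<in> D \<Longrightarrow> j \<in> \<Omega> \<Longrightarrow> le i j \<Longrightarrow> j \<in> D" using D unfolding dual_ideals_def by auto
  have MD: "?M \<subseteq> D" unfolding minel_def by auto
  have fM: "finite ?M" using MD DO fin by (auto intro: finite_subset)
  have I0: "?I0 \<in> down_sets le \<Omega>"
    unfolding down_sets_def
  proof (intro CollectI conjI ballI impI)
    show "?I0 \<subseteq> \<Omega>" using MD DO by auto
    fix i j assume i: "i \<in> ?I0" and j: "j \<in> \<Omega>" and ji: "le j i"
    show "j \<in> ?I0"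
    proof (cases "j \<in> D")
      case False then show ?thesis using j by auto
    next
      case True
      then have "i \<in> D" using Dup[of j i] ji i DO MD by auto
      then have "i \<in> ?M" using i by auto
      then have "j = i" using True ji unfolding minel_def by auto
      then show ?thesis using i by auto
    qed
  qed
  have cardI0: "card ?I0 = ?N"
    using fin fM MD by (subst card_Un_disjoint) auto
  have I0D: "?I0 \<inter> D = ?M" using MD by auto
  have maxI0: "?M \<subseteq> maxel le ?I0"
  proof
    fix q assume q: "q \<in> ?M"
    have "\<forall>z\<in>?I0. le q z \<longrightarrow> z = q"
    proof (intro ballI impI)
      fix z assume z: "z \<in> ?I0" "le q z"
      have "z \<in> D" using Dup[of q z] q z MD DO by auto
      then have "z \<in> ?M" using z by auto
      then show "z = q" using q z unfolding minel_def by auto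
    qed
    then show "q \<in> maxel le ?I0" using q unfolding maxel_def by auto
  qed
  have maxD: "maxel le ?I0 - D = {}"
  proof (rule ccontr)
    assume "maxel le ?I0 - D \<noteq> {}"
    then obtain c where c: "c \<in> maxel le ?I0" "c \<notin> D" by auto
    then have cO: "c \<in> \<Omega> - D" using MD unfolding maxel_def by auto
    then obtain q where q: "q \<in> ?M" "le c q" using good by auto
    have "q = c" using c(1) q unfolding maxel_def by auto
    then show False using q MD c by auto
  qed
  have ph: "phi le \<tau> \<eta> D ?I0 \<noteq> 0"
  proof -
    have "(\<Prod>i\<in>?I0 - maxel le ?I0. \<tau> i) \<noteq> 0"
      using tau fin fM MD DO by (subst prod_zero_iff) auto
    then show ?thesis unfolding phi_def using I0D maxI0 by (simp add: maxD)
  qed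
  have others: "\<forall>I\<in>down_sets le \<Omega> - {?I0}. (if card I = ?N then phi le \<tau> \<eta> D I else 0) = 0"
  proof (intro ballI)
    fix I assume I: "I \<in> down_sets le \<Omega> - {?I0}"
    show "(if card I = ?N then phi le \<tau> \<eta> D I else 0) = 0"
    proof (rule ccontr)
      assume "(if card I = ?N then phi le \<tau> \<eta> D I else 0) \<noteq> 0"
      then have cI: "card I = ?N" and nz: "phi le \<tau> \<eta> D I \<noteq> 0" by (auto split: if_splits)
      have Id: "I \<in> down_sets le \<Omega>" using I by auto
      have IO: "I \<subseteq> \<Omega>" using Id unfolding down_sets_def by auto
      have fI: "finite I" using IO fin by (auto intro: finite_subset)
      have s1: "I \<inter> D \<subseteq> ?M" using phi_nz_min[OF D Id nz] .
      have s2: "I - D \<subseteq> \<Omega> - D" using IO by auto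
      have cs: "card I = card (I - D) + card (I \<inter> D)"
        using fI by (metis Int_Diff_disjoint Un_Diff_Int card_Un_disjoint finite_Diff finite_Int inf_commute)
      have c1: "card (I - D) \<le> card (\<Omega> - D)" using s2 fin by (intro card_mono) auto
      have c2: "card (I \<inter> D) \<le> card ?M" using s1 fM by (intro card_mono) auto
      have "card (I - D) = card (\<Omega> - D)" "card (I \<inter> D) = card ?M" using cs c1 c2 cI by arith+
      then have "I - D = \<Omega> - D" "I \<inter> D = ?M"
        using s1 s2 fin fM by (metis card_subset_eq finite_Diff)+
      then have "I = ?I0" by blast
      then show False using I by auto
    qed
  qed
  have "coeff (pi_poly le \<tau> \<eta> \<Omega> D) ?N = (if card ?I0 = ?N then phi le \<tau> \<eta> D ?I0 else 0)"
    unfolding coeff_pi sum.remove[OF down_sets_fin I0] sum.neutral[OF others] by simp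
  then show ?thesis using cardI0 ph by simp
qed


context
  fixes l :: nat
  assumes habove: "\<And>y d. y \<in> \<Omega> \<Longrightarrow> d \<in> \<Omega> \<Longrightarrow> l + 1 \<le> len \<Omega> le y
      \<Longrightarrow> len \<Omega> le y + 1 \<le> len \<Omega> le d \<Longrightarrow> le y d"
begin

lemma lev_Q: "x \<in> \<Omega> \<Longrightarrow> len \<Omega> le x = l + 1 \<Longrightarrow> x \<in> QQ \<Omega> le l"
proof -
  assume x: "x \<in> \<Omega>" "len \<Omega> le x = l + 1"
  have "\<forall>z\<in>\<Omega>. le x z \<and> z \<noteq> x \<longrightarrow> l + 2 \<le> len \<Omega> le z"
  proof (intro ballI impI)
    fix z assume "z \<in> \<Omega>" "le x z \<and> z \<noteq> x"
    then have "len \<Omega> le x < len \<Omega> le z" using len_mono[of x z] x by auto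
    then show "l + 2 \<le> len \<Omega> le z" using x by simp
  qed
  then show ?thesis unfolding QQ_def using x by simp
qed

lemma Q_D: "QQ \<Omega> le l \<subseteq> DD \<Omega> le l"
  unfolding DD_def QQ_def using po_refl by auto

lemma big_D: "y \<in> \<Omega> \<Longrightarrow> l + 1 \<le> len \<Omega> le y \<Longrightarrow> y \<in> DD \<Omega> le l"
proof -
  assume y: "y \<in> \<Omega>" "l + 1 \<le> len \<Omega> le y"
  then obtain x where "x \<in> \<Omega>" "le x y" "len \<Omega> le x = l + 1" using len_down[of y "l+1"] by auto
  then show ?thesis using lev_Q y unfolding DD_def by blast
qed

lemma D_dual: "DD \<Omega> le l \<in> dual_ideals \<Omega> le"
  unfolding dual_ideals_def
proof (intro CollectI conjI ballI impI)
  show "DD \<Omega> le l \<subseteq> \<Omega>" unfolding DD_def by auto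
  fix i j assume i: "i \<in> DD \<Omega> le l" and j: "j \<in> \<Omega>" "le i j"
  obtain q where q: "q \<in> QQ \<Omega> le l" "le q i" "i \<in> \<Omega>" using i unfolding DD_def by auto
  have "q \<in> \<Omega>" using q unfolding QQ_def by auto
  then have "le q j" using po_trans[of q i j] q j by blast
  then show "j \<in> DD \<Omega> le l" unfolding DD_def using q j by blast
qed

lemma Q_min: "minel le (DD \<Omega> le l) = QQ \<Omega> le l"
proof
  show "minel le (DD \<Omega> le l) \<subseteq> QQ \<Omega> le l"
  proof
    fix d assume d: "d \<in> minel le (DD \<Omega> le l)"
    then obtain q where q: "q \<in> QQ \<Omega> le l" "le q d" unfolding minel_def DD_def by auto
    then have "q = d" using d Q_D unfolding minel_def by auto
    then show "d \<in> QQ \<Omega> le l" using q by simp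
  qed
next
  show "QQ \<Omega> le l \<subseteq> minel le (DD \<Omega> le l)"
  proof
    fix q assume q: "q \<in> QQ \<Omega> le l"
    have "\<forall>e\<in>DD \<Omega> le l. le e q \<longrightarrow> e = q"
    proof (intro ballI impI)
      fix e assume e: "e \<in> DD \<Omega> le l" "le e q"
      then obtain q' where q': "q' \<in> QQ \<Omega> le l" "le q' e" "e \<in> \<Omega>" unfolding DD_def by auto
      have qO: "q \<in> \<Omega>" "q' \<in> \<Omega>" using q q'(1) unfolding QQ_def by auto
      have lq: "le q' q" using po_trans q' e qO by blast
      show "e = q"
      proof (rule ccontr)
        assume "e \<noteq> q"
        then have "q' \<noteq> q" using po_antisym q' e qO by metis
        then have "l + 2 \<le> len \<Omega> le q" using q'(1) lq qO unfolding QQ_def by auto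
        then show False using q unfolding QQ_def by auto
      qed
    qed
    then show "q \<in> minel le (DD \<Omega> le l)" using q Q_D unfolding minel_def by auto
  qed
qed

lemma below_Q_notD:
  assumes y: "y \<in> QQ \<Omega> le l" and x: "x \<in> \<Omega>" "le x y" "x \<noteq> y"
  shows "x \<notin> DD \<Omega> le l"
proof
  assume "x \<in> DD \<Omega> le l"
  then obtain q where q: "q \<in> QQ \<Omega> le l" "le q x" unfolding DD_def by auto
  have O: "q \<in> \<Omega>" "y \<in> \<Omega>" using q y unfolding QQ_def by auto
  have "le q y" using po_trans q O x by blast
  moreover have "q \<noteq> y" using po_antisym q x O by metis
  ultimately have "l + 2 \<le> len \<Omega> le y" using q O unfolding QQ_def by auto
  then show False using y unfolding QQ_def by auto
qed

lemma D_good: "\<forall>c\<in>\<Omega> - DD \<Omega> le l. \<exists>q\<in>minel le (DD \<Omega> le l). le c q"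
proof
  fix c assume c: "c \<in> \<Omega> - DD \<Omega> le l"
  define S where "S = {z \<in> \<Omega>. le c z \<and> len \<Omega> le z \<le> l + 1}"
  have cO: "c \<in> \<Omega>" and cD: "c \<notin> DD \<Omega> le l" using c by auto
  have "\<not> l + 1 \<le> len \<Omega> le c" using cO cD big_D[of c] by blast
  then have "len \<Omega> le c \<le> l" by simp
  then have cS: "c \<in> S" unfolding S_def using cO po_refl[OF cO] by simp
  have SO: "S \<subseteq> \<Omega>" unfolding S_def by blast
  have fS0: "finite S" using finite_subset[OF SO fin] .
  have fS: "finite (len \<Omega> le ` S)" using finite_imageI[OF fS0] .
  have ne: "len \<Omega> le ` S \<noteq> {}" using cS by blast
  have "Max (len \<Omega> le ` S) \<in> len \<Omega> le ` S" using Max_in[OF fS ne] .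
  then obtain z where zS: "z \<in> S" and z2: "len \<Omega> le z = Max (len \<Omega> le ` S)" by (metis imageE)
  have zO: "z \<in> \<Omega>" and cz: "le c z" and zl: "len \<Omega> le z \<le> l + 1" using zS unfolding S_def by blast+
  have zmax: "len \<Omega> le z' \<le> len \<Omega> le z" if "z' \<in> S" for z'
  proof -
    have "len \<Omega> le z' \<in> len \<Omega> le ` S" using that by (rule imageI)
    then have "len \<Omega> le z' \<le> Max (len \<Omega> le ` S)" using Max_ge[OF fS] by blast
    then show ?thesis using z2 by simp
  qed
  have zQ: "\<forall>z'\<in>\<Omega>. le z z' \<and> z' \<noteq> z \<longrightarrow> l + 2 \<le> len \<Omega> le z'"
  proof (intro ballI impI)
    fix z' assume z'O: "z' \<in> \<Omega>" and z': "le z z' \<and> z' \<noteq> z"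
    show "l + 2 \<le> len \<Omega> le z'"
    proof (rule ccontr)
      assume A: "\<not> l + 2 \<le> len \<Omega> le z'"
      have "le c z'" using po_trans[OF cO zO z'O cz] z' by blast
      then have "z' \<in> S" unfolding S_def using A z'O by simp
      then have "len \<Omega> le z' \<le> len \<Omega> le z" by (rule zmax)
      moreover have "len \<Omega> le z < len \<Omega> le z'" using len_mono[OF zO z'O] z' by blast
      ultimately show False by simp
    qed
  qed
  have "z \<in> QQ \<Omega> le l" unfolding QQ_def using zO zl zQ by blast
  then show "\<exists>q\<in>minel le (DD \<Omega> le l). le c q" using cz Q_min by blast
qed

lemma swap:
  assumes t: "t \<in> QQ \<Omega> le l" and y: "y \<in> \<Omega>" "len \<Omega> le y = l + 1" "t \<noteq> y"
    and s: "s \<in> \<Omega>" "le s y" "s \<noteq> y" "l \<le> len \<Omega> le s" "\<not> le s t"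
  defines "D' \<equiv> insert s (DD \<Omega> le l - {t})"
  shows "D' \<in> dual_ideals \<Omega> le" "card D' = card (DD \<Omega> le l)"
    "card (minel le D') < card (QQ \<Omega> le l)"
proof -
  let ?D = "DD \<Omega> le l" and ?Q = "QQ \<Omega> le l"
  have yQ: "y \<in> ?Q" using lev_Q y by auto
  have sD: "s \<notin> ?D" using below_Q_notD[OF yQ s(1-3)] .
  have tD: "t \<in> ?D" using t Q_D by auto
  have DO: "?D \<subseteq> \<Omega>" unfolding DD_def by auto
  have fD: "finite ?D" using DO fin by (auto intro: finite_subset)
  have tmin: "t \<in> minel le ?D" using t Q_min by auto
  show "D' \<in> dual_ideals \<Omega> le"
    unfolding dual_ideals_def D'_def
  proof (intro CollectI conjI ballI impI)
    show "insert s (?D - {t}) \<subseteq> \<Omega>" using s DO by auto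
    fix i j assume i: "i \<in> insert s (?D - {t})" and j: "j \<in> \<Omega>" "le i j"
    show "j \<in> insert s (?D - {t})"
    proof (cases "i = s")
      case True
      show ?thesis
      proof (cases "j = s")
        case False
        then have "len \<Omega> le s < len \<Omega> le j" using len_mono[of s j] s j True by blast
        then have "j \<in> ?D" using big_D[of j] j s by simp
        moreover have "j \<noteq> t" using s True j by auto
        ultimately show ?thesis by auto
      qed auto
    next
      case False
      then have iD: "i \<in> ?D" "i \<noteq> t" using i by auto
      then have "j \<in> ?D" using D_dual j unfolding dual_ideals_def by auto
      moreover have "j \<noteq> t"
      proof
        assume "j = t"
        then have "i = t" using tmin iD j unfolding minel_def by auto
        then show False using iD by auto
      qed
      ultimately show ?thesis by auto
    qed
  qed
  show "card D' = card ?D"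
  proof -
    have "card ?D > 0" using tD fD card_gt_0_iff by blast
    then show ?thesis unfolding D'_def using sD tD fD by (simp add: card_Diff_singleton)
  qed
  have tyQ: "t \<in> ?Q" "y \<in> ?Q" "t \<noteq> y" using t yQ y by auto
  have sub: "minel le D' \<subseteq> insert s (?Q - {t, y})"
  proof
    fix d assume d: "d \<in> minel le D'"
    show "d \<in> insert s (?Q - {t, y})"
    proof (cases "d = s")
      case False
      then have dD: "d \<in> ?D" "d \<noteq> t" using d unfolding minel_def D'_def by auto
      have dmin: "\<And>e. e \<in> D' \<Longrightarrow> le e d \<Longrightarrow> e = d" using d unfolding minel_def by auto
      have "d \<noteq> y"
      proof
        assume "d = y"
        then have "s = d" using dmin[of s] s unfolding D'_def by auto
        then show False using False by auto
      qed
      moreover have "d \<in> ?Q"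
      proof -
        obtain q where q: "q \<in> ?Q" "le q d" using dD unfolding DD_def by auto
        show ?thesis
        proof (cases "q = d")
          case True then show ?thesis using q by simp
        next
          case qd: False
          show ?thesis
          proof (cases "q = t")
            case False
            then have "q \<in> D'" using q Q_D unfolding D'_def by auto
            then have "q = d" using dmin q by auto
            then show ?thesis using qd by simp
          next
            case True
            have O: "t \<in> \<Omega>" "d \<in> \<Omega>" using t dD DO unfolding QQ_def by auto
            have tp: "\<forall>z\<in>\<Omega>. le t z \<and> z \<noteq> t \<longrightarrow> l + 2 \<le> len \<Omega> le z"
              using t unfolding QQ_def by blast
            have "l + 2 \<le> len \<Omega> le d" using tp O(2) q(2) True qd by blast
            then have "le y d" using habove[of y d] y O by auto
            moreover have "y \<in> D'" using yQ Q_D tyQ unfolding D'_def by auto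
            ultimately have "y = d" using dmin by auto
            then show ?thesis using \<open>d \<noteq> y\<close> by simp
          qed
        qed
      qed
      ultimately show ?thesis using dD by auto
    qed auto
  qed
  have fQ: "finite ?Q" using Q_D fD by (auto intro: finite_subset)
  have c1: "card (minel le D') \<le> card (insert s (?Q - {t, y}))"
    using sub fQ by (intro card_mono) auto
  have c2: "card (insert s (?Q - {t, y})) \<le> Suc (card (?Q - {t, y}))"
    using fQ by (simp add: card_insert_if)
  have c3: "card (?Q - {t, y}) = card ?Q - 2" using tyQ fQ by (simp add: card_Diff_subset)
  have c4: "card {t, y} \<le> card ?Q" using tyQ by (intro card_mono[OF fQ]) auto
  have c5: "card {t, y} = 2" using tyQ by simp
  show "card (minel le D') < card ?Q" using c1 c2 c3 c4 c5 by linarith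
qed

end

end


theorem proposition3p3:
  fixes \<Omega> :: "'a set" and le :: "'a \<Rightarrow> 'a \<Rightarrow> bool"
    and \<tau> \<eta> :: "'a \<Rightarrow> 'k::field"
  assumes "finite \<Omega>"
    and "poset_on \<Omega> le"
    and "\<forall>i\<in>\<Omega>. \<tau> i \<noteq> 0"
    and "\<forall>B\<in>dual_ideals \<Omega> le. \<forall>D\<in>dual_ideals \<Omega> le.
           card B = card D \<longrightarrow> pi_poly le \<tau> \<eta> \<Omega> B = pi_poly le \<tau> \<eta> \<Omega> D"
  shows "hierarchical \<Omega> le"
proof (rule ccontr)
  assume nh: "\<not> hierarchical \<Omega> le"
  note fin = assms(1) and po = assms(2)
  define V where "V = {len \<Omega> le u | u. u \<in> \<Omega> \<and> (\<exists>v\<in>\<Omega>. len \<Omega> le u + 1 \<le> len \<Omega> le v \<and> \<not> le u v)}"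
  have Vne: "V \<noteq> {}" using nh unfolding hierarchical_def V_def by blast
  have "V \<subseteq> len \<Omega> le ` \<Omega>" unfolding V_def by blast
  then have Vfin: "finite V" using finite_subset fin by blast
  define l where "l = Max V"
  have "l \<in> V" unfolding l_def using Max_in[OF Vfin Vne] .
  then obtain u v0 where u: "u \<in> \<Omega>" "len \<Omega> le u = l"
    and v0: "v0 \<in> \<Omega>" "len \<Omega> le u + 1 \<le> len \<Omega> le v0" "\<not> le u v0"
    unfolding V_def by blast
  have habove: "\<And>y d. y \<in> \<Omega> \<Longrightarrow> d \<in> \<Omega> \<Longrightarrow> l + 1 \<le> len \<Omega> le y
      \<Longrightarrow> len \<Omega> le y + 1 \<le> len \<Omega> le d \<Longrightarrow> le y d"
  proof (rule ccontr)
    fix y d assume y: "y \<in> \<Omega>" "d \<in> \<Omega>" "l + 1 \<le> len \<Omega> le y"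
      "len \<Omega> le y + 1 \<le> len \<Omega> le d" "\<not> le y d"
    then have "len \<Omega> le y \<in> V" unfolding V_def by blast
    then have "len \<Omega> le y \<le> l" unfolding l_def using Max_ge[OF Vfin] by blast
    then show False using y by simp
  qed
  have l1: "1 \<le> l" using len_pos[OF fin po u(1)] u(2) by simp
  obtain v where v: "v \<in> \<Omega>" "le v v0" "len \<Omega> le v = l + 1"
    using len_down[OF fin po v0(1), of "l + 1"] v0 u by auto
  have nuv: "\<not> le u v"
  proof
    assume "le u v"
    then have "le u v0" using po_trans[OF fin po u(1) v(1) v0(1)] v by blast
    then show False using v0 by simp
  qed
  have "\<exists>t y s. t \<in> QQ \<Omega> le l \<and> y \<in> \<Omega> \<and> len \<Omega> le y = l + 1 \<and> t \<noteq> y \<and> s \<in> \<Omega>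
      \<and> le s y \<and> s \<noteq> y \<and> l \<le> len \<Omega> le s \<and> \<not> le s t"
  proof (cases "u \<in> QQ \<Omega> le l")
    case True
    have "2 \<le> len \<Omega> le v" using v l1 by simp
    then obtain w where w: "w \<in> \<Omega>" "le w v" "w \<noteq> v" "len \<Omega> le w + 1 = len \<Omega> le v"
      using len_pred[OF fin po v(1)] by blast
    have nwu: "\<not> le w u"
    proof
      assume wu: "le w u"
      show False
      proof (cases "w = u")
        case True then show False using w nuv by simp
      next
        case False
        then have "len \<Omega> le w < len \<Omega> le u" using len_mono[OF fin po w(1) u(1) wu] by blast
        then show False using w v u by simp
      qed
    qed
    have "u \<noteq> v" using u v by auto
    then show ?thesis using True v w nwu by (intro exI[of _ u] exI[of _ v] exI[of _ w]) simp
  next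
    case False
    have "len \<Omega> le u \<le> l + 1" using u by simp
    then obtain z where z: "z \<in> \<Omega>" "le u z" "z \<noteq> u" "\<not> l + 2 \<le> len \<Omega> le z"
      using False u(1) unfolding QQ_def by blast
    have "len \<Omega> le u < len \<Omega> le z" using len_mono[OF fin po u(1) z(1) z(2)] z(3) by blast
    then have zl: "len \<Omega> le z = l + 1" using z(4) u by simp
    have vQ: "v \<in> QQ \<Omega> le l" using lev_Q[OF fin po habove v(1) v(3)] .
    have "v \<noteq> z" using z(2) nuv by auto
    then show ?thesis using vQ z zl u nuv
      by (intro exI[of _ v] exI[of _ z] exI[of _ u]) auto
  qed
  then obtain t y s where t: "t \<in> QQ \<Omega> le l" and y: "y \<in> \<Omega>" "len \<Omega> le y = l + 1" "t \<noteq> y"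
    and s: "s \<in> \<Omega>" "le s y" "s \<noteq> y" "l \<le> len \<Omega> le s" "\<not> le s t" by blast
  define D where "D = DD \<Omega> le l"
  define D' where "D' = insert s (D - {t})"
  have sw: "D' \<in> dual_ideals \<Omega> le" "card D' = card D" "card (minel le D') < card (QQ \<Omega> le l)"
    using swap[OF fin po habove t y s] unfolding D'_def D_def by auto
  have Dd: "D \<in> dual_ideals \<Omega> le" unfolding D_def using D_dual[OF fin po habove] .
  have cc: "card D = card D'" using sw(2) by simp
  have eq: "pi_poly le \<tau> \<eta> \<Omega> D = pi_poly le \<tau> \<eta> \<Omega> D'"
    using assms(4)[rule_format, OF Dd sw(1) cc] .
  have mD: "minel le D = QQ \<Omega> le l" unfolding D_def using Q_min[OF fin po habove] .
  let ?N = "card (\<Omega> - D) + card (minel le D)"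
  have n1: "coeff (pi_poly le \<tau> \<eta> \<Omega> D) ?N \<noteq> 0"
    using coeff_nz[OF fin po Dd _ assms(3)] D_good[OF fin po habove] unfolding D_def by blast
  have DO: "D \<subseteq> \<Omega>" "D' \<subseteq> \<Omega>" using Dd sw(1) unfolding dual_ideals_def by auto
  have "card (\<Omega> - D') = card (\<Omega> - D)"
    using DO fin sw(2) by (simp add: card_Diff_subset finite_subset)
  then have "card (\<Omega> - D') + card (minel le D') < ?N" using sw(3) mD by simp
  then have "coeff (pi_poly le \<tau> \<eta> \<Omega> D') ?N = 0" using coeff_zero[OF fin po sw(1)] by blast
  then show False using n1 eq by simp
qed

end
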